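(* Let $m,n$ be positive integers with $m>n$ and $m\ge 3$, and let $q$ be an odd prime. Let $(X,y_1,y_2)$ be positive integers with $X>1$, $\gcd(X,q)=1$, $y_1>y_2$, satisfying \[ X^m-X^n=q^{y_1}-q^{y_2}. \] Put $E=e_q(X)$ (then $E$ divides $m-n$), $N=(m-n)/E$, $e=\nu_q(N)$, and assume that $N$ is odd and $y_2>e$. Define polynomials in $\mathbb Z[t]$: \[ A_E(t)=\begin{cases} t-1 & E=1,\\ t^{E-1}+t^{E-2}+\cdots+t+1 & E>1,\end{cases}\qquad B_{n,E}(t)=\begin{cases} t^n & E=1,\\ t^n(t-1) & E>1,\end{cases} \] \[ I_{E,N}(t)=t^{E(N-1)}+t^{E(N-2)}+\cdots+t^E+1. \] If $E>1$, assume at least one of: (I) $A_E(X)\ne q^{y_2-e}$; (II) $\dfrac{(y_2-e)(m-2E+2)+E-1}{m+\delta(E-1)}\ge \dfrac{\log 2}{\log q}$, where $\delta=1$ if $X^m>q^{y_1}$ and $\delta=0$ if $X^m<q^{y_1}$. Let $(P,Q)$ be the (unique) pair of polynomials in $\mathbb Q[t]$ with $\deg Q<\deg A_E$ such that \[ A_E(t)P(t)+B_{n,E}(t)\,I_{E,N}(t)\,Q(t)=1 \] in $\mathbb Q[t]$, and let $l$ be the least positive integer with $lP\in\mathbb Z[t]$ and $lQ\in\mathbb Z[t]$. Then \[ q^{y_2}\,l\,Q(X)+l\,A_E(X)\equiv 0 \pmod{q^{\kappa}}, \] where \[ \kappa=\begin{cases}\min\left\{2(y_2-e),\ \left\lceil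 \frac{m}{E-1}(y_2-e)\right\rceil\right\} & \text{if } E>1 \text{ and (I) holds},\\ 2(y_2-e) & \text{if } E=1, \text{ or } E>1 \text{ and (II) holds}.\end{cases} \]
   Context: For a positive integer $M$ and an integer $A$ coprime to $M$, $e_M(A)$ denotes the least positive integer $e$ such that $A^e\equiv 1$ or $A^e\equiv -1\pmod M$. For a prime $p$ and nonzero integer $A$, $\nu_p(A)$ is the exponent of $p$ in $A$. *)

theory Defs
  imports Complex_Main "HOL-Computational_Algebra.Computational_Algebra" "HOL-Number_Theory.Cong"
begin

definition e_ord :: "int \<Rightarrow> int \<Rightarrow> nat" where
  "e_ord M A = (LEAST e::nat. e > 0 \<and> ([A ^ e = 1] (mod M) \<or> [A ^ e = -1] (mod M)))"

definition polyA :: "nat \<Rightarrow> rat poly" where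
  "polyA E = (if E = 1 then [:-1, 1:] else (\<Sum>i<E. monom 1 i))"

definition polyB :: "nat \<Rightarrow> nat \<Rightarrow> rat poly" where
  "polyB n E = (if E = 1 then monom 1 n else monom 1 n * [:-1, 1:])"

definition polyI :: "nat \<Rightarrow> nat \<Rightarrow> rat poly" where
  "polyI E N = (\<Sum>j<N. monom 1 (E * j))"

definition int_coeffs :: "rat poly \<Rightarrow> bool" where
  "int_coeffs p \<longleftrightarrow> (\<forall>i. coeff p i \<in> \<int>)"

end

theory Submission
  imports Defs "HOL-Computational_Algebra.Field_as_Ring" "HOL-Computational_Algebra.Polynomial_Factorial"
begin


lemma sum_shift_lt: "(\<Sum>j<(x::nat)+y. f j) = (\<Sum>j<x. f j) + (\<Sum>j<y. (f (x + j)::'a::comm_monoid_add))"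
  by (induction y) (auto simp: add.assoc)

lemma sum_pow_mult: "(\<Sum>j<a*M. (Y::nat)^j) = (\<Sum>j<M. Y^j) * (\<Sum>i<a. (Y^M)^i)"
proof (induction a)
  case 0 then show ?case by simp
next
  case (Suc a)
  have "(\<Sum>j<Suc a*M. Y^j) = (\<Sum>j<a*M + M. Y^j)" by (simp add: add.commute)
  also have "\<dots> = (\<Sum>j<a*M. Y^j) + (\<Sum>j<M. Y^(a*M+j))" by (rule sum_shift_lt)
  also have "(\<Sum>j<M. Y^(a*M+j)) = (Y^M)^a * (\<Sum>j<M. Y^j)"
    unfolding power_add by (simp add: sum_distrib_right power_mult mult_ac)
  finally show ?case using Suc by (simp add: algebra_simps)
qed

lemma gauss2: "2 * (\<Sum>i<n. i) = n * (n - 1::nat)"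
proof (induction n)
  case (Suc n) then show ?case by (cases n) (auto simp: algebra_simps)
qed simp

lemma pow_1mod: "\<exists>r. (1 + q*k)^i = 1 + i*q*k + q^2 * (r::nat)"
proof (induction i)
  case 0 then show ?case by simp
next
  case (Suc i)
  then obtain r where r: "(1 + q*k)^i = 1 + i*q*k + q^2 * r" by blast
  have "(1 + q*k)^Suc i = (1 + q*k) * (1 + i*q*k + q^2 * r)" by (simp only: power_Suc r)
  also have "\<dots> = 1 + Suc i*q*k + q^2 * (r + i*k*k + q*k*r)" by (simp add: algebra_simps power2_eq_square)
  finally show ?case by blast
qed

lemma not_sq_dvd:
  assumes q: "prime (q::nat)" "odd q" and Z: "[Z = 1] (mod q)"
  shows "\<not> q^2 dvd (\<Sum>i<q. Z^i)"
proof
  assume h: "q^2 dvd (\<Sum>i<q. Z^i)"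
  have q1: "q > 1" using q prime_gt_1_nat by blast
  have "Z \<ge> 1"
  proof (rule ccontr)
    assume "\<not> Z \<ge> 1" then have "Z = 0" by simp
    with Z have "[0 = 1] (mod q)" by simp
    then have "q dvd 1" by (simp add: cong_def)
    then show False using q1 by simp
  qed
  then have "q dvd Z - 1" using Z by (simp add: cong_altdef_nat cong_sym_eq)
  then obtain k where k: "Z = 1 + q*k" using \<open>Z \<ge> 1\<close> by (metis dvd_def le_add_diff_inverse)
  have "\<forall>i. \<exists>r. Z^i = 1 + i*q*k + q^2 * r" using pow_1mod k by auto
  then obtain r where r: "\<And>i. Z^i = 1 + i*q*k + q^2 * r i" by metis
  obtain h where hq: "q = 2*h+1" using q(2) oddE by blast
  have s: "(\<Sum>i<q. i) = q*h" using gauss2[of q] hq by simp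
  have "(\<Sum>i<q. Z^i) = (\<Sum>i<q. 1 + i*(q*k) + q^2 * r i)" using r by (simp add: mult.assoc)
  also have "\<dots> = q + (\<Sum>i<q. i)*(q*k) + q^2 * (\<Sum>i<q. r i)"
    by (simp only: sum.distrib sum_distrib_left sum_distrib_right) simp
  also have "\<dots> = q + q^2 * (h*k + (\<Sum>i<q. r i))" using s by (simp add: algebra_simps power2_eq_square)
  finally have "q^2 dvd q + q^2 * (h*k + (\<Sum>i<q. r i))" using h by simp
  then have "q^2 dvd q" by (simp add: dvd_add_left_iff)
  then have "q*q dvd q*1" by (simp add: power2_eq_square)
  then have "q dvd 1" using q1 by (metis nat_mult_dvd_cancel_disj not_one_less_zero)
  then show False using q1 by simp
qed

lemma geo_pos: "N > 0 \<Longrightarrow> (\<Sum>j<N. (Y::nat)^j) > 0"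
proof -
  assume "N > 0"
  then have "Y^0 \<le> (\<Sum>j<N. Y^j)" by (intro member_le_sum) auto
  then show ?thesis by simp
qed

lemma lte_bound:
  assumes q: "prime (q::nat)" "odd q" and Y: "[Y = 1] (mod q)" and N: "N > 0"
  shows "multiplicity q (\<Sum>j<N. Y^j) \<le> multiplicity q N"
  using N
proof (induction N rule: less_induct)
  case (less N)
  have q1: "q > 1" using q prime_gt_1_nat by blast
  show ?case
  proof (cases "q dvd N")
    case False
    have "[(\<Sum>j<N. Y^j) = (\<Sum>j<N. 1)] (mod q)"
      by (rule cong_sum) (metis Y cong_pow power_one)
    then have "[(\<Sum>j<N. Y^j) = N] (mod q)" by simp
    then have "\<not> q dvd (\<Sum>j<N. Y^j)" using False cong_dvd_iff by blast
    then show ?thesis by (simp add: not_dvd_imp_multiplicity_0)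
  next
    case True
    then obtain M where M: "N = q*M" by blast
    have M0: "M > 0" using less.prems M by (cases M) auto
    have MN: "M < N" using M M0 q1 by simp
    have IH: "multiplicity q (\<Sum>j<M. Y^j) \<le> multiplicity q M" using less.IH MN M0 by blast
    define T where "T = (\<Sum>i<q. (Y^M)^i)"
    have S: "(\<Sum>j<N. Y^j) = (\<Sum>j<M. Y^j) * T" unfolding T_def M by (rule sum_pow_mult)
    have YM: "[Y^M = 1] (mod q)" by (metis Y cong_pow power_one)
    have T2: "\<not> q^2 dvd T" unfolding T_def by (rule not_sq_dvd[OF q YM])
    have T0: "T > 0" unfolding T_def using q1 by (intro geo_pos) simp
    have T1: "multiplicity q T \<le> 1"
    proof (rule ccontr)
      assume "\<not> multiplicity q T \<le> 1"
      then have "2 \<le> multiplicity q T" by simp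
      then have "q^2 dvd T" by (rule multiplicity_dvd')
      with T2 show False by simp
    qed
    have pe: "prime_elem q" using q by simp
    have "multiplicity q (\<Sum>j<N. Y^j) = multiplicity q (\<Sum>j<M. Y^j) + multiplicity q T"
      unfolding S proof (rule prime_elem_multiplicity_mult_distrib[OF pe])
      show "(\<Sum>j<M. Y^j) \<noteq> 0" using geo_pos[OF M0, of Y] by linarith
      show "T \<noteq> 0" using T0 by linarith
    qed
    also have "\<dots> \<le> multiplicity q M + 1" using IH T1 by simp
    also have "multiplicity q N = Suc (multiplicity q M)" unfolding M
      using M0 q1 by (intro multiplicity_times_same) auto
    ultimately show ?thesis by simp
  qed
qed

lemma pow_dvd_from_mult:
  assumes "prime (p::nat)" "x > 0" "y > 0" "p^k dvd x*y" "multiplicity p y \<le> e"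
  shows "p^(k-e) dvd x"
proof -
  have pe: "prime_elem p" using assms by simp
  have nu: "\<not> is_unit p" using assms not_prime_unit by blast
  have "k \<le> multiplicity p (x*y)" using assms nu by (intro multiplicity_geI) auto
  also have "\<dots> = multiplicity p x + multiplicity p y" using assms pe
    by (intro prime_elem_multiplicity_mult_distrib) auto
  finally have "k - e \<le> multiplicity p x" using assms by simp
  then show ?thesis by (rule multiplicity_dvd')
qed



lemma poly_A: "poly (polyA E) x = (if E = 1 then x - 1 else (\<Sum>i<E. x^i))"
  by (simp add: polyA_def poly_sum poly_monom)

lemma poly_B: "poly (polyB n E) x = (if E = 1 then x^n else x^n * (x - 1))"
  by (simp add: polyB_def poly_monom algebra_simps)

lemma poly_I: "poly (polyI E N) x = (\<Sum>j<N. x^(E*j))"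
  by (simp add: polyI_def poly_sum poly_monom)

lemma int_coeffs_poly: "int_coeffs p \<Longrightarrow> poly p (of_int x) \<in> \<int>"
  unfolding int_coeffs_def poly_altdef
  by (intro Ints_sum Ints_mult Ints_power) auto

lemma int_coeffs_smult: "int_coeffs p \<Longrightarrow> int_coeffs (smult (of_nat d) p)"
  unfolding int_coeffs_def by (auto intro: Ints_mult)

lemma int_coeffs_ex: "\<exists>d::nat. d > 0 \<and> int_coeffs (smult (of_nat d) p)"
proof (induction p)
  case 0 then show ?case by (auto simp: int_coeffs_def intro: exI[of _ 1])
next
  case (pCons a p)
  then obtain d where d: "d > 0" "int_coeffs (smult (of_nat d) p)" by blast
  obtain u v where uv: "quotient_of a = (u, v)" by (cases "quotient_of a")
  have v0: "v > 0" using uv quotient_of_denom_pos by blast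
  have a: "a = of_int u / of_int v" using uv quotient_of_div by blast
  have av: "of_int v * a \<in> \<int>" using a v0 by simp
  define d' where "d' = d * nat v"
  have "int_coeffs (smult (of_nat d') (pCons a p))"
    unfolding int_coeffs_def
  proof
    fix i show "coeff (smult (of_nat d') (pCons a p)) i \<in> \<int>"
    proof (cases i)
      case 0
      have "coeff (smult (of_nat d') (pCons a p)) i = of_nat d * (of_int v * a)" using v0 0 by (simp add: d'_def)
      then show ?thesis using av by (metis Ints_mult Ints_of_nat)
    next
      case (Suc j)
      have "coeff (smult (of_nat d) p) j \<in> \<int>" using d(2) by (simp add: int_coeffs_def)
      then have "of_nat (nat v) * (of_nat d * coeff p j) \<in> \<int>" by (simp add: Ints_mult)
      then show ?thesis using Suc by (simp add: d'_def mult_ac)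
    qed
  qed
  moreover have "d' > 0" using d v0 by (simp add: d'_def)
  ultimately show ?case by blast
qed

lemma int_coeffs_ex2: "\<exists>d::nat. d > 0 \<and> int_coeffs (smult (of_nat d) p) \<and> int_coeffs (smult (of_nat d) q)"
proof -
  obtain d1 where d1: "d1 > 0" "int_coeffs (smult (of_nat d1) p)" using int_coeffs_ex by blast
  obtain d2 where d2: "d2 > 0" "int_coeffs (smult (of_nat d2) q)" using int_coeffs_ex by blast
  have "int_coeffs (smult (of_nat d2) (smult (of_nat d1) p))" using d1 int_coeffs_smult by blast
  moreover have "int_coeffs (smult (of_nat d1) (smult (of_nat d2) q))" using d2 int_coeffs_smult by blast
  ultimately show ?thesis using d1 d2
    by (intro exI[of _ "d1*d2"]) (auto simp: mult.commute)
qed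

lemma TA: "E > 1 \<Longrightarrow> [:-1,1:] * polyA E = monom 1 E - 1"
proof -
  assume "E > 1"
  have "poly ([:-1,1:] * polyA E) x = poly (monom 1 E - 1) x" for x
  proof -
    have "poly ([:-1,1:] * polyA E) x = poly [:-1,1:] x * poly (polyA E) x" by (rule poly_mult)
    also have "\<dots> = (x - 1) * (\<Sum>i<E. x^i)" using \<open>E > 1\<close> by (simp add: poly_A)
    also have "\<dots> = x^E - 1" by (simp add: power_diff_1_eq)
    finally show ?thesis by (simp add: poly_monom)
  qed
  then have "poly ([:-1,1:] * polyA E) = poly (monom 1 E - 1)" by (rule ext)
  then show ?thesis by (simp add: poly_eq_poly_eq_iff)
qed

lemma A_dvd: "E \<ge> 1 \<Longrightarrow> polyA E dvd monom 1 E - 1"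
proof (cases "E = 1")
  case True
  have "poly (monom (1::rat) 1 - 1) = poly [:-1,1:]"
    by (rule ext) (simp add: poly_monom)
  then have "monom (1::rat) 1 - 1 = [:-1,1:]" by (simp add: poly_eq_poly_eq_iff)
  then show ?thesis using True by (simp add: polyA_def)
next
  case False
  assume "E \<ge> 1"
  then have "E > 1" using False by simp
  then show ?thesis using TA by (metis dvd_triv_right)
qed

lemma xm1_dvd: "(x::'a::comm_ring_1) - 1 dvd x^j - 1"
  by (simp add: power_diff_1_eq)

lemma A_dvd_pow: "E \<ge> 1 \<Longrightarrow> polyA E dvd monom 1 (E*j) - 1"
proof -
  assume E: "E \<ge> 1"
  have "monom (1::rat) E - 1 dvd (monom 1 E)^j - 1" by (rule xm1_dvd)
  then have "monom (1::rat) E - 1 dvd monom 1 (E*j) - 1" by (simp add: monom_power)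
  then show ?thesis using A_dvd[OF E] dvd_trans by blast
qed

lemma cop_monom: "E \<ge> 1 \<Longrightarrow> coprime (polyA E) (monom 1 n)"
proof (rule coprimeI)
  fix d assume E: "E \<ge> 1" and d: "d dvd polyA E" "d dvd monom 1 n"
  have "d dvd (monom 1 n)^E" using d(2) E by (simp add: dvd_power_le dvd_trans)
  then have "d dvd monom 1 (E*n)" by (simp add: monom_power mult.commute)
  moreover have "d dvd monom 1 (E*n) - 1" using d(1) A_dvd_pow[OF E] dvd_trans by blast
  ultimately have "d dvd monom 1 (E*n) - (monom 1 (E*n) - 1)" by (rule dvd_diff)
  then show "is_unit d" by simp
qed

lemma cop_I: "E \<ge> 1 \<Longrightarrow> N > 0 \<Longrightarrow> coprime (polyA E) (polyI E N)"
proof (rule coprimeI)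
  fix d assume E: "E \<ge> 1" and N: "N > 0" and d: "d dvd polyA E" "d dvd polyI E N"
  have "polyI E N - [:of_nat N:] = (\<Sum>j<N. monom 1 (E*j) - 1)"
    by (simp add: polyI_def sum_subtractf of_nat_poly)
  moreover have "polyA E dvd (\<Sum>j<N. monom 1 (E*j) - 1)"
    by (intro dvd_sum A_dvd_pow[OF E])
  ultimately have "d dvd polyI E N - [:of_nat N:]" using d(1) dvd_trans by metis
  then have "d dvd polyI E N - (polyI E N - [:of_nat N:])" using d(2) dvd_diff by blast
  then have "d dvd [:of_nat N:]" by simp
  moreover have "is_unit [:(of_nat N :: rat):]" using N by (intro is_unit_triv) simp
  ultimately show "is_unit d" using dvd_unit_imp_unit by blast
qed

lemma cop_T: "E > 1 \<Longrightarrow> coprime (polyA E) [:-1,1:]"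
proof (rule coprimeI)
  fix d assume E: "E > 1" and d: "d dvd polyA E" "d dvd [:-1,1:]"
  have "poly (polyA E - [:of_nat E:]) 1 = 0" using E by (simp add: poly_A)
  then have "[:-1,1:] dvd polyA E - [:of_nat E:]" by (metis poly_eq_0_iff_dvd)
  then have "d dvd polyA E - [:of_nat E:]" using d(2) dvd_trans by blast
  then have "d dvd polyA E - (polyA E - [:of_nat E:])" using d(1) dvd_diff by blast
  then have "d dvd [:of_nat E:]" by simp
  moreover have "is_unit [:(of_nat E :: rat):]" using E by (intro is_unit_triv) simp
  ultimately show "is_unit d" using dvd_unit_imp_unit by blast
qed

lemma cop_BI: "E \<ge> 1 \<Longrightarrow> N > 0 \<Longrightarrow> coprime (polyA E) (polyB n E * polyI E N)"
proof -
  assume E: "E \<ge> 1" and N: "N > 0"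
  have "coprime (polyA E) (polyB n E)"
  proof (cases "E = 1")
    case True then show ?thesis using cop_monom[OF E, of n] by (simp add: polyB_def)
  next
    case False
    then have "E > 1" using E by simp
    then show ?thesis using cop_monom[OF E, of n] cop_T[of E] False
      unfolding polyB_def by (simp only: coprime_mult_right_iff if_False)
  qed
  then show ?thesis using cop_I[OF E N] by (simp only: coprime_mult_right_iff)
qed

lemma deg_A: "E \<ge> 1 \<Longrightarrow> degree (polyA E) > 0"
proof (rule ccontr)
  assume E: "E \<ge> 1" and "\<not> degree (polyA E) > 0"
  then have d0: "degree (polyA E) = 0" by simp
  have c: "poly (polyA E) x = coeff (polyA E) 0" for x unfolding poly_altdef d0 by simp
  show False
  proof (cases "E = 1")
    case True then show False using c[of 0] c[of 1] by (simp add: poly_A)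
  next
    case False
    have "poly (polyA E) 0 = 1" using E False by (simp add: poly_A power_0_left)
    moreover have "poly (polyA E) 1 = of_nat E" using False by (simp add: poly_A)
    ultimately show False using c[of 0] c[of 1] False by simp
  qed
qed

lemma PQ_exists:
  assumes "E \<ge> 1" "N > 0"
  shows "\<exists>P Q. degree Q < degree (polyA E) \<and> polyA E * P + polyB n E * polyI E N * Q = 1"
proof -
  define A where "A = polyA E"
  define C where "C = polyB n E * polyI E N"
  have "gcd A C = 1" using cop_BI[OF assms] unfolding A_def C_def by (simp add: coprime_iff_gcd_eq_1)
  then obtain P0 Q0 where pq: "P0 * A + Q0 * C = 1"
    using bezout_coefficients_fst_snd[of A C] by metis
  have A0: "A \<noteq> 0" using deg_A[OF assms(1)] unfolding A_def by auto
  define Q where "Q = Q0 mod A"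
  define P where "P = P0 + C * (Q0 div A)"
  have "A * P + C * Q = P0 * A + C * (A * (Q0 div A) + Q0 mod A)"
  proof -
    have "\<And>u v. A*(P0 + C*u) + C*v = P0*A + C*(A*u+v)" by (simp add: algebra_simps)
    then show ?thesis unfolding P_def Q_def by blast
  qed
  also have "\<dots> = 1" using pq by (simp add: mult.commute)
  finally have eq: "A * P + C * Q = 1" .
  have "degree Q < degree A"
    using degree_mod_less[OF A0, of Q0] deg_A[OF assms(1)] unfolding Q_def A_def by auto
  then show ?thesis using eq unfolding A_def C_def by blast
qed



lemma bern_nat:
  assumes "2*k \<le> (Y::nat)" "Y \<ge> 1"
  shows "Y^k \<le> 2*(Y-1)^k"
proof -
  have Y0: "real Y > 0" using assms by simp
  have "1 + real k * (- 1 / real Y) \<le> (1 + (- 1 / real Y))^k"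
    using Y0 assms by (intro Bernoulli_inequality) (simp add: field_simps)
  then have "(1 - real k / real Y) * real Y^k \<le> (1 - 1/real Y)^k * real Y^k"
    using Y0 by (intro mult_right_mono) auto
  also have "(1 - 1/real Y)^k * real Y^k = (real Y - 1)^k"
    using Y0 by (simp add: power_mult_distrib[symmetric] field_simps)
  finally have h: "(1 - real k / real Y) * real Y^k \<le> (real Y - 1)^k" .
  have "1/2 \<le> 1 - real k / real Y" using assms Y0 by (simp add: field_simps)
  then have "(1/2) * real Y^k \<le> (1 - real k / real Y) * real Y^k" by (intro mult_right_mono) auto
  with h have "real Y^k \<le> 2 * (real Y - 1)^k" by linarith
  then have "real (Y^k) \<le> real (2*(Y-1)^k)" using assms by (simp add: of_nat_diff)
  then show ?thesis by linarith
qed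

lemma two_pow_ge: "2 * (E::nat) \<le> 2^E"
proof (induction E)
  case (Suc E)
  show ?case
  proof (cases E)
    case 0 then show ?thesis by simp
  next
    case (Suc E')
    then have "2 \<le> (2::nat)^E" by simp
    moreover have "(2::nat)^Suc E = 2^E + 2^E" by simp
    ultimately show ?thesis using Suc.IH by (simp only: mult_Suc_right)
  qed
qed simp

lemma sizeI:
  fixes q X m n E a y1 \<alpha> :: nat
  assumes q3: "q \<ge> 3" and X2: "X \<ge> 2" and E2: "E \<ge> 2" and nE: "n + E \<le> m"
   and alpha: "2 * q^a \<le> \<alpha>" and XA: "(X-1)*\<alpha> = X^E - 1"
   and y1: "X^m - X^n < q^y1"
  shows "m*a \<le> y1*(E-1)"
proof (rule ccontr)
  assume "\<not> ?thesis" then have lt: "y1*(E-1) + 1 \<le> m*a" by simp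
  have XE1: "X^E = X*X^(E-1)" using E2 by (cases E) auto
  have "X * q^a \<le> (2*(X-1))*q^a" using X2 by (intro mult_right_mono) auto
  also have "\<dots> = (X-1)*(2*q^a)" by simp
  also have "\<dots> \<le> (X-1)*\<alpha>" using alpha by simp
  also have "\<dots> < X^E" using XA X2 by simp
  finally have "X * q^a < X * X^(E-1)" using XE1 by simp
  then have qa: "q^a < X^(E-1)" by simp
  have h1: "q^(y1*(E-1)+1) \<le> q^(m*a)" using lt q3 by (intro power_increasing) auto
  have "q^(m*a) = (q^a)^m" by (simp add: power_mult mult.commute)
  also have "\<dots> \<le> (X^(E-1))^m" using qa by (intro power_mono) auto
  also have "\<dots> = X^((m-E)*(E-1)) * X^(E*(E-1))"
  proof -
    obtain r where r: "m = E + r" using nE by (metis add.assoc le_add1 le_Suc_ex add_leD2 le_add_diff_inverse)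
    obtain k where k: "E = Suc k" using E2 by (cases E) auto
    have "(E-1)*m = (m-E)*(E-1) + E*(E-1)" unfolding r k by (simp add: algebra_simps)
    then show ?thesis by (simp add: power_mult[symmetric] power_add[symmetric])
  qed
  finally have h2: "q^(m*a) \<le> X^((m-E)*(E-1)) * X^(E*(E-1))" .
  have Xn: "X^n \<le> X^(m-E)" using nE X2 by (intro power_increasing) auto
  have Xm: "X^m = X^(m-E) * X^E" using nE by (simp add: power_add[symmetric])
  have h3: "X^(m-E)*(X^E-1) \<le> X^m - X^n" using Xn Xm by (simp add: diff_mult_distrib2)
  have h4: "(X^(m-E)*(X^E-1))^(E-1) < (q^y1)^(E-1)"
    using h3 y1 E2 by (intro power_strict_mono) auto
  have "2*(E-1) \<le> 2^E" using two_pow_ge[of E] by simp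
  also have "(2::nat)^E \<le> X^E" using X2 by (intro power_mono) auto
  finally have h5: "X^(E*(E-1)) \<le> 2*(X^E-1)^(E-1)"
    using bern_nat[of "E-1" "X^E"] X2 by (simp add: power_mult)
  have "X^((m-E)*(E-1)) * X^(E*(E-1)) \<le> X^((m-E)*(E-1)) * (2*(X^E-1)^(E-1))"
    using h5 by simp
  also have "\<dots> = 2 * (X^(m-E)*(X^E-1))^(E-1)" by (simp add: power_mult_distrib power_mult)
  also have "\<dots> < 2 * (q^y1)^(E-1)" using h4 by simp
  finally have "q^(y1*(E-1)+1) < 2 * (q^y1)^(E-1)" using h1 h2 by simp
  moreover have "q^(y1*(E-1)+1) = q * (q^y1)^(E-1)" by (simp add: power_mult[symmetric])
  ultimately have "q * (q^y1)^(E-1) < 2 * (q^y1)^(E-1)" by linarith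
  then have "q < 2" by (metis mult_less_cancel2)
  then show False using q3 by simp
qed

lemma sizeE1:
  fixes q X m n a y1 :: nat
  assumes X2: "X \<ge> 2" and m3: "m \<ge> 3" and nm: "n < m" and q2: "q \<ge> 2"
    and dv: "q^a dvd X - 1" and y1: "X^m - X^n < q^y1"
  shows "2*a \<le> y1"
proof -
  have "q^a \<le> X - 1" using dv X2 by (intro dvd_imp_le) auto
  then have "q^(2*a) \<le> (X-1)*(X-1)" by (metis mult_le_mono power2_eq_square power_mult mult.commute)
  also have "\<dots> \<le> X^(m-1)*(X-1)" 
  proof -
    have "X - 1 \<le> X^1" by simp
    also have "\<dots> \<le> X^(m-1)" using X2 m3 by (intro power_increasing) auto
    finally show ?thesis by simp
  qed
  also have "\<dots> = X^m - X^(m-1)"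
  proof -
    obtain k where k: "m = Suc k" using m3 by (cases m) auto
    show ?thesis unfolding k by (simp add: diff_mult_distrib2 mult.commute)
  qed
  also have "\<dots> \<le> X^m - X^n" using nm X2 by (intro diff_le_mono2 power_increasing) auto
  also have "\<dots> < q^y1" by (rule y1)
  finally have "q^(2*a) < q^y1" .
  then show ?thesis using q2 by (simp add: power_less_imp_less_exp less_imp_le)
qed

lemma sizeII_real:
  fixes q m E a d :: nat
  assumes q3: "q \<ge> 3" and E2: "E \<ge> 2" and m3: "m \<ge> 3" and a1: "a \<ge> 1"
   and c2: "(real a * (real m - 2*real E + 2) + real E - 1) / (real m + real d*(real E - 1)) \<ge> ln 2 / ln (real q)"
  shows "(2*a-1)*(E-1) < a*m \<and> 2^(m + d*(E-1)) \<le> q^(a*m - (2*a-1)*(E-1))"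
proof -
  define D where "D = m + d*(E-1)"
  define num where "num = real a * (real m - 2*real E + 2) + real E - 1"
  have Dr: "real m + real d*(real E - 1) = real D" using E2 by (simp add: D_def of_nat_diff)
  have "D > 0" using m3 unfolding D_def by linarith
  then have Dpos: "real D > 0" by simp
  have lq: "ln (real q) > 0" using q3 by simp
  have "ln 2 / ln (real q) \<le> num / real D" using c2 Dr by (simp add: num_def)
  then have "ln 2 * real D \<le> num * ln (real q)" using Dpos lq by (simp add: field_simps)
  moreover have "ln 2 * real D > 0" using Dpos by simp
  ultimately have "num * ln (real q) > 0" by linarith
  then have numpos: "num > 0" using lq by (simp add: zero_less_mult_iff)
  have numeq: "num = real (a*m) - real ((2*a-1)*(E-1))"
  proof -
    obtain a' where a': "a = Suc a'" using a1 by (cases a) auto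
    obtain k where k: "E = Suc k" using E2 by (cases E) auto
    have "(2*a-1)*(E-1) = (2*a'+1)*k" unfolding a' k by simp
    then show ?thesis unfolding num_def a' k by (simp add: algebra_simps)
  qed
  then have "real ((2*a-1)*(E-1)) < real (a*m)" using numpos by linarith
  then have lt: "(2*a-1)*(E-1) < a*m" by (simp only: of_nat_less_iff)
  define K where "K = a*m - (2*a-1)*(E-1)"
  have Kr: "real K = num" using numeq lt by (simp add: K_def of_nat_diff)
  have "ln (real (2^D)) = real D * ln 2" by (simp add: ln_realpow)
  also have "\<dots> \<le> real K * ln (real q)" using \<open>ln 2 * real D \<le> num * ln (real q)\<close> Kr by (simp add: mult.commute)
  also have "\<dots> = ln (real (q^K))" using q3 by (simp add: ln_realpow)
  finally have "ln (real (2^D)) \<le> ln (real (q^K))" .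
  then have "real (2^D) \<le> real (q^K)" using q3 by (subst (asm) ln_le_cancel_iff) auto
  then have "2^D \<le> q^K" by linarith
  then show ?thesis using lt unfolding D_def K_def by simp
qed

lemma sizeII:
  fixes q X m n E a y1 \<alpha> :: nat and \<delta> :: real
  assumes q3: "q \<ge> 3" and X2: "X \<ge> 2" and E2: "E \<ge> 2" and nm: "n < m" and m3: "m \<ge> 3" and a1: "a \<ge> 1"
   and alpha: "q^a \<le> \<alpha>" and XA: "(X-1)*\<alpha> = X^E - 1" and y1: "X^m - X^n < q^y1"
   and ddef: "\<delta> = (if X^m > q^y1 then 1 else 0)"
   and c2: "(real a * (real m - 2*real E + 2) + real E - 1) / (real m + \<delta>*(real E - 1)) \<ge> ln 2 / ln (real q)"
  shows "2*a \<le> y1"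
proof (rule ccontr)
  assume "\<not> ?thesis" then have ya: "y1 \<le> 2*a - 1" by simp
  define d :: nat where "d = (if X^m > q^y1 then 1 else 0)"
  have dd: "\<delta> = real d" using ddef d_def by simp
  have R: "(2*a-1)*(E-1) < a*m \<and> 2^(m + d*(E-1)) \<le> q^(a*m - (2*a-1)*(E-1))"
    using sizeII_real[OF q3 E2 m3 a1, of d] c2 dd by simp
  have XE1: "X^E = X*X^(E-1)" using E2 by (cases E) auto
  have "X * q^a \<le> X*\<alpha>" using alpha by simp
  also have "\<dots> \<le> (2*(X-1))*\<alpha>" using X2 by (intro mult_right_mono) auto
  also have "\<dots> = 2*(X^E - 1)" using XA by simp
  also have "\<dots> < 2*X^E" using X2 by simp
  finally have "X * q^a < X * (2*X^(E-1))" using XE1 by simp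
  then have qa: "q^a < 2*X^(E-1)" by simp
  have "q^(a*m) = (q^a)^m" by (simp add: power_mult)
  also have "\<dots> < (2*X^(E-1))^m" using qa m3 by (intro power_strict_mono) auto
  also have "\<dots> = 2^m * (X^m)^(E-1)" by (simp add: power_mult_distrib power_mult[symmetric] mult.commute)
  finally have h1: "q^(a*m) < 2^m * (X^m)^(E-1)" .
  have h2: "X^m \<le> 2^d * q^y1"
  proof (cases "X^m > q^y1")
    case True
    have "X^n * 2 \<le> X^n * X" using X2 by simp
    also have "\<dots> = X^(n+1)" by simp
    also have "\<dots> \<le> X^m" using nm X2 by (intro power_increasing) auto
    finally have "X^m \<le> 2*(X^m - X^n)" by simp
    also have "\<dots> \<le> 2*q^y1" using y1 by simp
    finally show ?thesis using True by (simp add: d_def)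
  next
    case False then show ?thesis by (simp add: d_def)
  qed
  have "(X^m)^(E-1) \<le> (2^d * q^y1)^(E-1)" using h2 by (intro power_mono) auto
  also have "\<dots> = 2^(d*(E-1)) * q^(y1*(E-1))" by (simp add: power_mult_distrib power_mult)
  also have "\<dots> \<le> 2^(d*(E-1)) * q^((2*a-1)*(E-1))" using ya q3 by (intro mult_left_mono power_increasing) auto
  finally have h3: "(X^m)^(E-1) \<le> 2^(d*(E-1)) * q^((2*a-1)*(E-1))" .
  have "q^(a*m) < 2^m * (2^(d*(E-1)) * q^((2*a-1)*(E-1)))"
    using h1 h3 by (meson less_le_trans mult_le_mono2)
  also have "\<dots> = 2^(m + d*(E-1)) * q^((2*a-1)*(E-1))" by (simp add: power_add)
  also have "\<dots> \<le> q^(a*m - (2*a-1)*(E-1)) * q^((2*a-1)*(E-1))" using R by simp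
  also have "\<dots> = q^(a*m)" using R by (simp add: power_add[symmetric])
  finally show False by simp
qed



lemma E_facts:
  fixes m n q X y1 y2 :: nat
  assumes hq: "prime q" and hqodd: "odd q" and hX: "X > 1" and hcop: "coprime X q"
    and hmn: "m > n" and hy2: "y2 \<ge> 1" and hy: "y1 > y2"
    and heq: "int X ^ m - int X ^ n = int q ^ y1 - int q ^ y2"
    and hNodd: "odd ((m - n) div e_ord (int q) (int X))"
  shows "e_ord (int q) (int X) \<ge> 1 \<and> e_ord (int q) (int X) dvd (m - n)
    \<and> [int X ^ e_ord (int q) (int X) = 1] (mod int q)
    \<and> (e_ord (int q) (int X) > 1 \<longrightarrow> \<not> int q dvd int X - 1)
    \<and> int q ^ y2 dvd int X ^ (m - n) - 1"
proof -
  define E where "E = e_ord (int q) (int X)"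
  define D where "D = m - n"
  define x where "x = int X"
  define P where "P = (\<lambda>e::nat. e > 0 \<and> ([x ^ e = 1] (mod int q) \<or> [x ^ e = -1] (mod int q)))"
  have Edef: "E = (LEAST e. P e)" unfolding E_def e_ord_def P_def x_def by simp
  have "q \<ge> 2" using hq prime_ge_2_nat by blast
  moreover have "q \<noteq> 2" using hqodd by auto
  ultimately have q3: "q \<ge> 3" by simp
  have mD: "m = n + D" using hmn by (simp add: D_def)
  have "x ^ m - x ^ n = x ^ n * (x ^ D - 1)" unfolding mD by (simp add: power_add algebra_simps)
  moreover have "int q ^ y1 - int q ^ y2 = int q ^ y2 * (int q ^ (y1 - y2) - 1)"
    using hy by (simp add: algebra_simps power_add[symmetric])
  ultimately have "int q ^ y2 dvd x ^ n * (x ^ D - 1)" using heq x_def by (metis dvd_triv_left)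
  moreover have "coprime (int q ^ y2) (x ^ n)" using hcop by (simp add: coprime_commute x_def)
  ultimately have dvdD: "int q ^ y2 dvd x ^ D - 1" by (simp add: coprime_dvd_mult_right_iff)
  moreover have "int q dvd int q ^ y2" using hy2 by (simp add: dvd_power)
  ultimately have "int q dvd x ^ D - 1" using dvd_trans by blast
  then have cD: "[x ^ D = 1] (mod int q)" by (simp add: cong_iff_dvd_diff)
  have D0: "D > 0" using hmn by (simp add: D_def)
  have "P D" using cD D0 by (simp add: P_def)
  then have PE: "P E" unfolding Edef by (rule LeastI)
  have minE: "\<And>e. e < E \<Longrightarrow> \<not> P e" unfolding Edef by (rule not_less_Least)
  have E0: "E > 0" using PE by (simp add: P_def)
  define N where "N = D div E"
  define r where "r = D mod E"
  have Dsplit: "x ^ D = (x ^ E) ^ N * x ^ r"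
    by (simp add: N_def r_def power_mult[symmetric] power_add[symmetric])
  have rE: "r < E" using E0 by (simp add: r_def)
  have Nodd: "odd N" using hNodd by (simp add: N_def D_def E_def)
  have not2: "\<not> [1 = -1] (mod int q)"
  proof
    assume "[1 = -1] (mod int q)"
    then have "int q dvd 2" by (simp add: cong_iff_dvd_diff)
    then have "q dvd 2" using int_dvd_int_iff[of q 2] by simp
    then have "q \<le> 2" by (simp add: dvd_imp_le)
    then show False using q3 by simp
  qed
  have c1: "[x ^ E = 1] (mod int q)"
  proof (rule ccontr)
    assume "\<not> ?thesis"
    then have cm: "[x ^ E = -1] (mod int q)" using PE by (simp add: P_def)
    have "[(x ^ E) ^ N * x ^ r = (-1) ^ N * x ^ r] (mod int q)" by (intro cong_mult cong_pow cm cong_refl)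
    then have "[x ^ D = - (x ^ r)] (mod int q)" using Dsplit Nodd by simp
    then have "[- (x ^ r) = 1] (mod int q)" using cD by (metis cong_sym cong_trans)
    then have cr: "[x ^ r = -1] (mod int q)" by (metis cong_minus_minus_iff minus_minus)
    show False
    proof (cases "r = 0")
      case True then show False using cr not2 by simp
    next
      case False then show False using minE[OF rE] cr by (simp add: P_def)
    qed
  qed
  have r0: "r = 0"
  proof (rule ccontr)
    assume r: "r \<noteq> 0"
    have "[(x ^ E) ^ N * x ^ r = 1 ^ N * x ^ r] (mod int q)" by (intro cong_mult cong_pow c1 cong_refl)
    then have "[x ^ D = x ^ r] (mod int q)" using Dsplit by simp
    then have "[x ^ r = 1] (mod int q)" using cD by (metis cong_sym cong_trans)
    then show False using minE[OF rE] r by (simp add: P_def)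
  qed
  have Edvd: "E dvd D" using r0 unfolding r_def by (rule mod_0_imp_dvd)
  have nX1: "E > 1 \<longrightarrow> \<not> int q dvd x - 1"
  proof
    assume "E > 1"
    show "\<not> int q dvd x - 1"
    proof
      assume "int q dvd x - 1"
      then have "[x ^ 1 = 1] (mod int q)" by (simp add: cong_iff_dvd_diff)
      then show False using minE[OF \<open>E > 1\<close>] by (simp add: P_def)
    qed
  qed
  show ?thesis using E0 Edvd c1 nX1 dvdD unfolding E_def D_def x_def by simp
qed



theorem mainTheorem4:
  fixes m n q X y1 y2 :: nat
  assumes hn: "n \<ge> 1" and hmn: "m > n" and hm3: "m \<ge> 3"
    and hq: "prime q" and hqodd: "odd q"
    and hX: "X > 1" and hcop: "coprime X q"
    and hy2: "y2 \<ge> 1" and hy: "y1 > y2"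
    and heq: "int X ^ m - int X ^ n = int q ^ y1 - int q ^ y2"
    and hNodd: "odd ((m - n) div e_ord (int q) (int X))"
    and he: "y2 > multiplicity q ((m - n) div e_ord (int q) (int X))"
    and hcond: "e_ord (int q) (int X) > 1 \<longrightarrow>
      (let E = e_ord (int q) (int X); e = multiplicity q ((m - n) div E);
           \<delta> = (if X ^ m > q ^ y1 then 1 else 0 :: real) in
        poly (polyA E) (of_nat X) \<noteq> of_nat (q ^ (y2 - e))
        \<or> (real (y2 - e) * (real m - 2 * real E + 2) + real E - 1) / (real m + \<delta> * (real E - 1))
            \<ge> ln 2 / ln (real q))"
  shows "let E = e_ord (int q) (int X); N = (m - n) div E; e = multiplicity q N;
             \<delta> = (if X ^ m > q ^ y1 then 1 else 0 :: real);
             condI = (poly (polyA E) (of_nat X) \<noteq> of_nat (q ^ (y2 - e)));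
             condII = ((real (y2 - e) * (real m - 2 * real E + 2) + real E - 1)
                        / (real m + \<delta> * (real E - 1)) \<ge> ln 2 / ln (real q))
         in (\<exists>P Q. degree Q < degree (polyA E) \<and>
                   polyA E * P + polyB n E * polyI E N * Q = 1)
          \<and> (\<forall>P Q. degree Q < degree (polyA E) \<and>
                   polyA E * P + polyB n E * polyI E N * Q = 1 \<longrightarrow>
               (let l = (LEAST l::nat. l > 0 \<and> int_coeffs (smult (of_nat l) P)
                                              \<and> int_coeffs (smult (of_nat l) Q));
                    val = of_nat (q ^ y2) * of_nat l * poly Q (of_nat X)
                          + of_nat l * poly (polyA E) (of_nat X)
                in (\<forall>\<kappa>. ((E = 1 \<or> (E > 1 \<and> condII)) \<and> \<kappa> = 2 * (y2 - e))
                       \<or> (E > 1 \<and> condI \<and>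
                           \<kappa> = min (2 * (y2 - e)) (nat \<lceil>real m / real (E - 1) * real (y2 - e)\<rceil>))
                     \<longrightarrow> (\<exists>z::int. of_int z = val \<and> [z = 0] (mod (int q ^ \<kappa>))))))"
proof -
  define E where "E = e_ord (int q) (int X)"
  define N where "N = (m - n) div E"
  define e where "e = multiplicity q N"
  define a where "a = y2 - e"
  have EF: "E \<ge> 1 \<and> E dvd (m - n) \<and> [int X ^ E = 1] (mod int q)
    \<and> (E > 1 \<longrightarrow> \<not> int q dvd int X - 1) \<and> int q ^ y2 dvd int X ^ (m - n) - 1"
    unfolding E_def by (rule E_facts[OF hq hqodd hX hcop hmn hy2 hy heq hNodd])
  then have E1: "E \<ge> 1" and Edvd: "E dvd (m - n)" and c1: "[int X ^ E = 1] (mod int q)"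
    and nX1: "E > 1 \<Longrightarrow> \<not> int q dvd int X - 1" and dvdD: "int q ^ y2 dvd int X ^ (m - n) - 1"
    by auto
  have mnEN: "m - n = E * N" using Edvd by (simp add: N_def)
  have Nodd: "odd N" using hNodd by (simp add: N_def E_def)
  then have N0: "N > 0" by (cases N) auto
  have ea: "e < y2" using he by (simp add: e_def N_def E_def)
  have a1: "a \<ge> 1" using ea by (simp add: a_def)
  have q2: "q \<ge> 2" using hq prime_ge_2_nat by blast
  have "q \<noteq> 2" using hqodd by auto
  with q2 have q3: "q \<ge> 3" by simp
  define Y where "Y = X ^ E"
  define I' where "I' = (\<Sum>j<N. Y^j)"
  define \<alpha> where "\<alpha> = (if E = 1 then X - 1 else (\<Sum>i<E. X^i))"
  have Ycong: "[Y = 1] (mod q)" using c1 unfolding Y_def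
    by (metis cong_int_iff of_nat_1 of_nat_power)
  have key: "int X ^ E - 1 = (int X - 1) * int (\<Sum>i<E. X^i)"
    by (simp add: power_diff_1_eq)
  have key2: "int X ^ (m - n) - 1 = (int Y - 1) * int I'"
    unfolding mnEN I'_def Y_def by (simp add: power_mult power_diff_1_eq)
  have dvdAI: "int q ^ y2 dvd int \<alpha> * int I'"
  proof (cases "E = 1")
    case True
    have "int Y - 1 = int \<alpha>" using True hX by (simp add: Y_def \<alpha>_def of_nat_diff)
    then show ?thesis using dvdD key2 by simp
  next
    case False
    then have E2: "E > 1" using E1 by simp
    have "int X ^ (m - n) - 1 = (int X - 1) * (int \<alpha> * int I')"
      using key2 key False by (simp add: Y_def \<alpha>_def)
    moreover have "coprime (int q ^ y2) (int X - 1)"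
    proof -
      have "prime (int q)" using hq by simp
      then have "coprime (int q) (int X - 1)" using nX1[OF E2] by (simp add: prime_imp_coprime)
      then show ?thesis by simp
    qed
    ultimately show ?thesis using dvdD by (metis coprime_dvd_mult_right_iff)
  qed
  then have dvdAI': "q ^ y2 dvd \<alpha> * I'" by (metis int_dvd_int_iff of_nat_mult of_nat_power)
  have alpha0: "\<alpha> > 0" using hX E1 by (auto simp: \<alpha>_def intro!: geo_pos)
  have I0: "I' > 0" using N0 by (simp add: I'_def geo_pos del: sum_pos)
  have mI: "multiplicity q I' \<le> e" unfolding I'_def e_def by (rule lte_bound[OF hq hqodd Ycong N0])
  have dA: "q ^ a dvd \<alpha>" unfolding a_def by (rule pow_dvd_from_mult[OF hq alpha0 I0 dvdAI' mI])
  have Xmn: "X^n \<le> X^m" using hX hmn by (intro power_increasing) auto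
  have y1': "X^m - X^n < q^y1"
  proof -
    have "int (X^m - X^n) = int X ^ m - int X ^ n" using Xmn by (simp add: of_nat_diff)
    also have "\<dots> = int q ^ y1 - int q ^ y2" by (rule heq)
    also have "\<dots> < int q ^ y1" using q2 by simp
    finally show ?thesis by simp
  qed
  have "E \<le> E * N" using N0 by simp
  then have "E \<le> m - n" using mnEN by simp
  then have nE: "n + E \<le> m" using hmn by linarith
  have XA: "(X-1)*\<alpha> = X^E - 1" if "E > 1"
  proof -
    have "int ((X-1)*\<alpha>) = int (X^E - 1)" using key that hX by (simp add: \<alpha>_def of_nat_diff)
    then show ?thesis by (simp only: of_nat_eq_iff)
  qed
  have polyAval: "poly (polyA E) (of_nat X) = (of_nat \<alpha> :: rat)"
    using hX by (simp add: poly_A \<alpha>_def of_nat_diff)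
  have BIA: "poly (polyB n E) (of_nat X) * poly (polyI E N) (of_nat X) * of_nat \<alpha> = (of_nat q^y1 - of_nat q^y2 :: rat)"
  proof -
    define x where "x = (of_nat X :: rat)"
    have "(of_int (int X ^ m - int X ^ n) :: rat) = of_int (int q ^ y1 - int q ^ y2)" using heq by simp
    then have hr: "x^m - x^n = (of_nat q^y1 - of_nat q^y2 :: rat)" by (simp add: x_def)
    have mm: "m = n + E*N" using mnEN hmn by simp
    have "poly (polyB n E) x * poly (polyI E N) x * of_nat \<alpha> = x^m - x^n"
    proof (cases "E = 1")
      case True
      have "poly (polyB n E) x * poly (polyI E N) x * of_nat \<alpha> = x^n * ((x - 1) * (\<Sum>j<N. x^j))"
        using True hX by (simp add: poly_B poly_I \<alpha>_def of_nat_diff x_def mult_ac)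
      also have "\<dots> = x^n * (x^N - 1)" by (simp add: power_diff_1_eq)
      also have "\<dots> = x^m - x^n" unfolding mm True by (simp add: power_add algebra_simps)
      finally show ?thesis .
    next
      case False
      have "poly (polyB n E) x * poly (polyI E N) x * of_nat \<alpha> = x^n * (((x - 1) * (\<Sum>i<E. x^i)) * (\<Sum>j<N. (x^E)^j))"
      proof -
        have sI: "poly (polyI E N) x = (\<Sum>j<N. (x^E)^j)" by (simp add: poly_I power_mult)
        have sA: "(of_nat \<alpha> :: rat) = (\<Sum>i<E. x^i)" using False by (simp add: \<alpha>_def x_def)
        show ?thesis using False by (simp add: sI sA poly_B mult_ac)
      qed
      also have "\<dots> = x^n * ((x^E - 1) * (\<Sum>j<N. (x^E)^j))" by (simp add: power_diff_1_eq)
      also have "\<dots> = x^n * ((x^E)^N - 1)" by (simp add: power_diff_1_eq)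
      also have "\<dots> = x^m - x^n" unfolding mm by (simp add: power_add power_mult algebra_simps)
      finally show ?thesis .
    qed
    then show ?thesis using hr by (simp add: x_def)
  qed
  have main: "\<exists>z::int. of_int z = of_nat (q^y2) * of_nat l * poly Q (of_nat X) + of_nat l * poly (polyA E) (of_nat X)
      \<and> [z = 0] (mod (int q ^ \<kappa>))"
    if eqn: "polyA E * P + polyB n E * polyI E N * Q = 1"
      and lp: "l > 0 \<and> int_coeffs (smult (of_nat l) P) \<and> int_coeffs (smult (of_nat l) Q)"
      and k1: "\<kappa> \<le> 2*a" and k2: "\<kappa> \<le> y1" for P Q l \<kappa>
  proof -
    define x where "x = (of_nat X :: rat)"
    define A' where "A' = (of_nat \<alpha> :: rat)"
    have ev: "poly (polyA E) x * poly P x + poly (polyB n E) x * poly (polyI E N) x * poly Q x = 1"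
      using arg_cong[OF eqn, of "\<lambda>p. poly p x"] by simp
    then have ev': "A' * poly P x + poly (polyB n E) x * poly (polyI E N) x * poly Q x = 1"
      using polyAval by (simp add: x_def A'_def)
    have BIA': "poly (polyB n E) x * poly (polyI E N) x * A' = of_nat q^y1 - of_nat q^y2"
      using BIA by (simp add: x_def A'_def)
    have "of_nat l * A' = of_nat l * A' * (A' * poly P x + poly (polyB n E) x * poly (polyI E N) x * poly Q x)"
      using ev' by simp
    also have "\<dots> = A'^2 * (of_nat l * poly P x) + (poly (polyB n E) x * poly (polyI E N) x * A') * (of_nat l * poly Q x)"
      by (simp add: algebra_simps power2_eq_square)
    also have "\<dots> = A'^2 * (of_nat l * poly P x) + (of_nat q^y1 - of_nat q^y2) * (of_nat l * poly Q x)"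
      using BIA' by simp
    finally have idn: "of_nat l * A' = A'^2 * (of_nat l * poly P x) + (of_nat q^y1 - of_nat q^y2) * (of_nat l * poly Q x)" .
    have "poly (smult (of_nat l) P) (of_int (int X)) \<in> \<int>" using lp int_coeffs_poly by blast
    then have "of_nat l * poly P x \<in> \<int>" by (simp add: x_def)
    then obtain a1 where a1: "of_nat l * poly P x = of_int a1" by (elim Ints_cases) auto
    have "poly (smult (of_nat l) Q) (of_int (int X)) \<in> \<int>" using lp int_coeffs_poly by blast
    then have "of_nat l * poly Q x \<in> \<int>" by (simp add: x_def)
    then obtain b1 where b1: "of_nat l * poly Q x = of_int b1" by (elim Ints_cases) auto
    define z where "z = int \<alpha> ^ 2 * a1 + int q ^ y1 * b1"
    have "of_nat (q^y2) * of_nat l * poly Q (of_nat X) + of_nat l * poly (polyA E) (of_nat X)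
        = of_nat q^y2 * (of_nat l * poly Q x) + of_nat l * A'"
      using polyAval by (simp add: x_def A'_def mult_ac)
    also have "\<dots> = A'^2 * (of_nat l * poly P x) + of_nat q^y1 * (of_nat l * poly Q x)"
      using idn by (simp add: algebra_simps)
    also have "\<dots> = of_int z" by (simp add: z_def a1 b1 A'_def)
    finally have zv: "of_int z = of_nat (q^y2) * of_nat l * poly Q (of_nat X) + of_nat l * poly (polyA E) (of_nat X)" by simp
    have "int q ^ a dvd int \<alpha>" using dA by (metis int_dvd_int_iff of_nat_power)
    then have "(int q ^ a)^2 dvd int \<alpha> ^ 2" by (rule dvd_power_same)
    moreover have "int q ^ \<kappa> dvd (int q ^ a)^2" using k1 by (simp add: power_mult[symmetric] le_imp_power_dvd mult.commute)
    ultimately have d1: "int q ^ \<kappa> dvd int \<alpha> ^ 2" using dvd_trans by blast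
    have d2: "int q ^ \<kappa> dvd int q ^ y1" using k2 by (simp add: le_imp_power_dvd)
    have "int q ^ \<kappa> dvd z" unfolding z_def using d1 d2 by (simp add: dvd_mult2)
    then have "[z = 0] (mod (int q ^ \<kappa>))" by (simp add: cong_0_iff)
    then show ?thesis using zv by blast
  qed
  have X2: "X \<ge> 2" using hX by simp
  have s1: "2*a \<le> y1" if "E = 1"
  proof -
    have "q^a dvd X - 1" using dA that by (simp add: \<alpha>_def)
    then show ?thesis by (rule sizeE1[OF X2 hm3 hmn q2 _ y1'])
  qed
  have s2: "2*a \<le> y1" if E2: "E > 1" and
     c2: "(real a * (real m - 2 * real E + 2) + real E - 1) / (real m + (if X ^ m > q ^ y1 then 1 else 0 :: real) * (real E - 1)) \<ge> ln 2 / ln (real q)"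
  proof -
    have al: "q^a \<le> \<alpha>" using dA alpha0 by (simp add: dvd_imp_le)
    show ?thesis using sizeII[OF q3 X2 _ hmn hm3 a1 al XA[OF E2] y1' refl] E2 c2 by simp
  qed
  have s3: "nat \<lceil>real m / real (E - 1) * real a\<rceil> \<le> y1" if E2: "E > 1" and
     c1: "poly (polyA E) (of_nat X) \<noteq> of_nat (q ^ a)"
  proof -
    have "\<alpha> \<noteq> q^a" using c1 polyAval by auto
    obtain k where k: "\<alpha> = q^a * k" using dA by blast
    have "k \<noteq> 0" using k alpha0 by auto
    moreover have "k \<noteq> 1" using k \<open>\<alpha> \<noteq> q^a\<close> by auto
    ultimately have "k \<ge> 2" by simp
    then have al2: "2 * q^a \<le> \<alpha>" using k by simp
    have ma: "m*a \<le> y1*(E-1)" using sizeI[OF q3 X2 _ nE al2 XA[OF E2] y1'] E2 by simp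
    have E1r: "real (E - 1) > 0" using E2 by simp
    have "real m * real a \<le> real y1 * real (E-1)" using ma by (metis of_nat_le_iff of_nat_mult)
    then have "real m / real (E - 1) * real a \<le> real y1" using E1r by (simp add: field_simps)
    then have "\<lceil>real m / real (E - 1) * real a\<rceil> \<le> int y1" by (simp add: ceiling_le_iff)
    then show ?thesis by (metis nat_int nat_mono)
  qed
  show ?thesis
    unfolding Let_def E_def[symmetric] N_def[symmetric] e_def[symmetric] a_def[symmetric]
    apply (intro conjI allI impI)
    subgoal by (rule PQ_exists[OF E1 N0])
    subgoal premises prems for P Q \<kappa>
    proof -
      have eqn: "polyA E * P + polyB n E * polyI E N * Q = 1" using prems(1) by blast
      define l where "l = (LEAST l::nat. l > 0 \<and> int_coeffs (smult (of_nat l) P) \<and> int_coeffs (smult (of_nat l) Q))"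
      have lp: "l > 0 \<and> int_coeffs (smult (of_nat l) P) \<and> int_coeffs (smult (of_nat l) Q)"
        unfolding l_def by (rule LeastI_ex[OF int_coeffs_ex2])
      have sz: "\<kappa> \<le> 2*a \<and> \<kappa> \<le> y1"
        using prems(2) apply (elim disjE conjE)
        subgoal premises pr using pr s1 by (metis order_refl)
        subgoal premises pr using pr s2 by (metis order_refl)
        subgoal premises pr using pr s3 by (metis min.cobounded1 min.cobounded2 le_trans)
        done
      show ?thesis using main[OF eqn lp] sz unfolding l_def by blast
    qed
    done
qed

end
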